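(* There is a constant $C$ such that for every $\ell\in\frac12\mathbb{N}$ and every $p\in\{-\ell,-\ell+1,\dots,\ell\}$, \[|c_p^\ell|\le C\min\left((1+\ell)^{-\frac14},\ \left||p|-\tfrac{\ell}{\sqrt2}\right|^{-\frac12}\right).\]
   Context: For $\ell\in\frac12\mathbb{N}=\{0,\frac12,1,\frac32,\dots\}$ and $p\in\{-\ell,-\ell+1,\dots,\ell\}$ (so $\ell\pm p$ are non-negative integers), $c_p^\ell=2^{-\ell}\int_0^{2\pi}(1+r^{-1}e^{-i\varphi})^{\ell-p}(1-re^{i\varphi})^{\ell+p}\frac{d\varphi}{2\pi}$, a quantity independent of $r>0$ (e.g. take $r=1$). By convention $0^{-1/2}=+\infty$, so the minimum is the first term when $|p|=\ell/\sqrt2$. *)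

theory Defs
  imports "HOL-Analysis.Analysis"
begin

text \<open>The integral defining c with a general radius r > 0; l - p and l + p are
  assumed to be natural numbers, so the exponents are the nats nat (floor (l-p)) etc.\<close>
definition c_coeff_r :: "real \<Rightarrow> real \<Rightarrow> real \<Rightarrow> complex" where
  "c_coeff_r r l p =
     complex_of_real (2 powr (- l)) *
     (integral {0..2*pi}
        (\<lambda>\<phi>. (1 + complex_of_real (inverse r) * cis (- \<phi>)) ^ nat \<lfloor>l - p\<rfloor> *
              (1 - complex_of_real r * cis \<phi>) ^ nat \<lfloor>l + p\<rfloor>)
      / complex_of_real (2 * pi))"

text \<open>c_p^l, taking r = 1 (the quantity is independent of r > 0).\<close>
definition c_coeff :: "real \<Rightarrow> real \<Rightarrow> complex" where
  "c_coeff l p = c_coeff_r 1 l p"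

text \<open>min((1+l)^(-1/4), ||p| - l/sqrt 2|^(-1/2)) with the convention 0^(-1/2) = +infinity.\<close>
definition bound_term :: "real \<Rightarrow> real \<Rightarrow> real" where
  "bound_term l p =
     (if \<bar>p\<bar> = l / sqrt 2 then (1 + l) powr (-1/4)
      else min ((1 + l) powr (-1/4)) (\<bar>\<bar>p\<bar> - l / sqrt 2\<bar> powr (-1/2)))"

end

theory Submission
  imports Defs "HOL-Real_Asymp.Real_Asymp"
begin

lemma ln_quad_bound:
  fixes y M :: real
  assumes y: "-1 < y" "1 + y \<le> M" and M: "1 \<le> M"
  shows "ln (1 + y) \<le> y - y^2 / (2* M^2)"
proof -
  define c where "c = 1/(2* M^2)"
  define h where "h t = t - c * t^2 - ln (1+t)" for t
  define h' where "h' t = 1 - 2 * c * t - 1/(1+t)" for t :: real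
  have D: "DERIV h t :> h' t" if "-1 < t" for t
  proof -
    have "M \<noteq> 0" "1 + t \<noteq> 0" using that M by auto
    then show ?thesis
      unfolding h_def h'_def using that M
      by (auto intro!: derivative_eq_intros simp: power2_eq_square)
  qed
  have key: "h' t * t \<ge> 0" if "-1 < t" "1 + t \<le> M" for t
  proof -
    have M2: "M \<le> M^2" using M by (simp add: power2_eq_square)
    have "h' t = t * (1/(1+t) - 1/M^2)" unfolding h'_def c_def using that M by (simp add: field_simps)
    moreover have "t * (1/(1+t) - 1/M^2) * t \<ge> 0"
    proof (cases "t \<ge> 0")
      case True
      then have "1/(1+t) \<ge> 1/M^2" using that M2 M by (intro divide_left_mono) auto
      then show ?thesis proof -
        assume X: "1/(1+t) \<ge> 1/M^2"
        have eq: "t * (1/(1+t) - 1/M^2) * t = (1/(1+t) - 1/M^2) * (t* t)" by (simp only: ac_simps)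
        show ?thesis by (subst eq, rule mult_nonneg_nonneg) (use X in auto)
      qed
    next
      case False
      then have "1/(1+t) \<ge> 1/M^2" using that M2 M by (intro divide_left_mono) auto
      then show ?thesis proof -
        assume X: "1/(1+t) \<ge> 1/M^2"
        have eq: "t * (1/(1+t) - 1/M^2) * t = (1/(1+t) - 1/M^2) * (t* t)" by (simp only: ac_simps)
        show ?thesis by (subst eq, rule mult_nonneg_nonneg) (use X in auto)
      qed
    qed
    ultimately show ?thesis by simp
  qed
  have "h y \<ge> 0"
  proof (cases y "0::real" rule: linorder_cases)
    case less
    obtain z where z: "y < z" "z < 0" "h 0 - h y = (0 - y) * h' z"
      using MVT2[OF less, of h h'] D y by force
    have "h' z * z \<ge> 0" using key[of z] z y M by auto
    then have "h' z \<le> 0" using z by (simp add: mult_le_0_iff zero_le_mult_iff)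
    moreover have "h 0 = 0" by (simp add: h_def)
    ultimately show ?thesis using z by (simp add: zero_le_mult_iff)
  next
    case equal then show ?thesis by (simp add: h_def)
  next
    case greater
    obtain z where z: "0 < z" "z < y" "h y - h 0 = (y - 0) * h' z"
      using MVT2[OF greater, of h h'] D y by force
    have "h' z * z \<ge> 0" using key[of z] z y M by auto
    then have "h' z \<ge> 0" using z by (simp add: zero_le_mult_iff)
    moreover have "h 0 = 0" by (simp add: h_def)
    ultimately show ?thesis using z by simp
  qed
  then show ?thesis by (simp add: h_def c_def)
qed

lemma quad_bound:
  fixes y M :: real
  assumes y: "0 \<le> 1 + y" "1 + y \<le> M" and M: "1 \<le> M"
  shows "(1 + y) ^ k \<le> exp (real k * (y - y^2 / (2* M^2)))"
proof -
  have "1 + y \<le> exp (y - y^2 / (2* M^2))"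
  proof (cases "1 + y = 0")
    case True then show ?thesis by simp
  next
    case False
    then have "-1 < y" using y by simp
    then have "ln (1+y) \<le> y - y^2/(2* M^2)" using ln_quad_bound y M by blast
    moreover have "exp (ln (1+y)) = 1 + y" using \<open>-1 < y\<close> by simp
    ultimately show ?thesis by (metis exp_le_cancel_iff)
  qed
  then have "(1 + y) ^ k \<le> exp (y - y^2 / (2* M^2)) ^ k" using y by (intro power_mono) auto
  also have "\<dots> = exp (real k * (y - y^2 / (2* M^2)))" by (simp add: exp_of_nat_mult)
  finally show ?thesis .
qed


lemma cis_int_has_integral:
  fixes m :: int
  shows "((\<lambda>t. cis (of_int m * t)) has_integral (if m = 0 then complex_of_real (2* pi) else 0)) {0..2* pi}"
proof (cases "m = 0")
  case True
  then show ?thesis using has_integral_const_real[of "1::complex" 0 "2* pi"]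
    by (simp add: scaleR_conv_of_real)
next
  case False
  define F where "F t = cis (of_int m * t) / (\<i> * of_int m)" for t
  have d: "(F has_vector_derivative cis (of_int m * t)) (at t within {0..2* pi})" for t
  proof -
    have "((\<lambda>t. cis (of_int m * t)) has_derivative (\<lambda>x. (of_int m * x) *\<^sub>R (\<i> * cis (of_int m * t)))) (at t within {0..2* pi})"
      by (auto intro!: derivative_eq_intros)
    then have "((\<lambda>t. cis (of_int m * t)) has_vector_derivative (of_int m *\<^sub>R (\<i> * cis (of_int m * t)))) (at t within {0..2* pi})"
      by (simp add: has_vector_derivative_def scaleR_conv_of_real mult.assoc mult.left_commute)
    then have "(F has_vector_derivative (of_int m *\<^sub>R (\<i> * cis (of_int m * t))) / (\<i> * of_int m)) (at t within {0..2* pi})"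
      unfolding F_def by (intro derivative_intros)
    then show ?thesis using False by (simp add: scaleR_conv_of_real)
  qed
  have "(( \<lambda>t. cis (of_int m * t)) has_integral (F (2* pi) - F 0)) {0..2* pi}"
    by (rule fundamental_theorem_of_calculus) (use d in auto)
  moreover have "F (2* pi) = F 0"
  proof -
    have "cis (of_int m * (2* pi)) = 1" using cis_multiple_2pi[of "of_int m"]
      by (simp add: mult.commute mult.left_commute)
    then show ?thesis by (simp add: F_def)
  qed
  ultimately show ?thesis using False by simp
qed

definition ker :: "real \<Rightarrow> nat \<Rightarrow> nat \<Rightarrow> real \<Rightarrow> complex" where
  "ker r a b \<phi> = (1 + complex_of_real (inverse r) * cis (- \<phi>)) ^ a * (1 - complex_of_real r * cis \<phi>) ^ b"

lemma ker_expand: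
  "ker r a b \<phi> = (\<Sum>j\<le>a. \<Sum>k\<le>b. (of_nat (a choose j) * of_real (inverse r) ^ j * of_nat (b choose k) * of_real (-r) ^ k)
        * cis (of_int (int k - int j) * \<phi>))"
proof -
  have e1: "(1 + complex_of_real (inverse r) * cis (- \<phi>)) ^ a = (\<Sum>j\<le>a. of_nat (a choose j) * of_real (inverse r) ^ j * cis (- (real j * \<phi>)))"
  proof -
    have "(1 + complex_of_real (inverse r) * cis (- \<phi>)) ^ a = (\<Sum>j\<le>a. of_nat (a choose j) * (complex_of_real (inverse r) * cis (- \<phi>)) ^ j)"
      by (subst add.commute, subst binomial_ring) simp
    also have "\<dots> = (\<Sum>j\<le>a. of_nat (a choose j) * of_real (inverse r) ^ j * cis (- (real j * \<phi>)))"
    proof (intro sum.cong refl)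
      fix j
      have "cis (- \<phi>) ^ j = cis (- (real j * \<phi>))" by (subst Complex.DeMoivre) simp
      then show "of_nat (a choose j) * (complex_of_real (inverse r) * cis (- \<phi>)) ^ j = of_nat (a choose j) * of_real (inverse r) ^ j * cis (- (real j * \<phi>))"
        by (simp add: power_mult_distrib)
    qed
    finally show ?thesis .
  qed
  have e2: "(1 - complex_of_real r * cis \<phi>) ^ b = (\<Sum>k\<le>b. of_nat (b choose k) * of_real (-r) ^ k * cis (real k * \<phi>))"
  proof -
    have "(1 - complex_of_real r * cis \<phi>) ^ b = (complex_of_real (-r) * cis \<phi> + 1) ^ b" by simp
    also have "\<dots> = (\<Sum>k\<le>b. of_nat (b choose k) * (complex_of_real (-r) * cis \<phi>) ^ k)"
      by (subst binomial_ring) simp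
    also have "\<dots> = (\<Sum>k\<le>b. of_nat (b choose k) * of_real (-r) ^ k * cis (real k * \<phi>))"
    proof (intro sum.cong refl)
      fix k
      have "cis \<phi> ^ k = cis (real k * \<phi>)" by (subst Complex.DeMoivre) simp
      then show "of_nat (b choose k) * (complex_of_real (-r) * cis \<phi>) ^ k = of_nat (b choose k) * of_real (-r) ^ k * cis (real k * \<phi>)"
        by (simp only: power_mult_distrib mult.assoc)
    qed
    finally show ?thesis .
  qed
  have "ker r a b \<phi> = (\<Sum>j\<le>a. \<Sum>k\<le>b. (of_nat (a choose j) * of_real (inverse r) ^ j * cis (- (real j * \<phi>))) * (of_nat (b choose k) * of_real (-r) ^ k * cis (real k * \<phi>)))"
    unfolding ker_def e1 e2 sum_product ..
  also have "\<dots> = (\<Sum>j\<le>a. \<Sum>k\<le>b. (of_nat (a choose j) * of_real (inverse r) ^ j * of_nat (b choose k) * of_real (-r) ^ k)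
        * cis (of_int (int k - int j) * \<phi>))"
  proof (intro sum.cong refl)
    fix j k
    have "cis (- (real j * \<phi>)) * cis (real k * \<phi>) = cis (of_int (int k - int j) * \<phi>)"
      by (simp add: cis_mult algebra_simps)
    then show "(of_nat (a choose j) * of_real (inverse r) ^ j * cis (- (real j * \<phi>))) * (of_nat (b choose k) * of_real (-r) ^ k * cis (real k * \<phi>)) =
       (of_nat (a choose j) * of_real (inverse r) ^ j * of_nat (b choose k) * of_real (-r) ^ k) * cis (of_int (int k - int j) * \<phi>)"
      by (metis (no_types, lifting) mult.assoc mult.left_commute)
  qed
  finally show ?thesis .
qed

lemma ker_has_integral:
  assumes "r > 0"
  shows "(ker r a b has_integral (2* pi) * (\<Sum>j\<le>a. (-1)^j * of_nat (a choose j) * of_nat (b choose j))) {0..2* pi}"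
proof -
  let ?c = "\<lambda>j k. (of_nat (a choose j) * of_real (inverse r) ^ j * of_nat (b choose k) * of_real (-r) ^ k) :: complex"
  have "((\<lambda>\<phi>. \<Sum>j\<le>a. \<Sum>k\<le>b. ?c j k * cis (of_int (int k - int j) * \<phi>)) has_integral
      (\<Sum>j\<le>a. \<Sum>k\<le>b. ?c j k * (if int k - int j = 0 then complex_of_real (2* pi) else 0))) {0..2* pi}"
    by (intro has_integral_sum finite_atMost has_integral_mult_right cis_int_has_integral)
  moreover have "(\<Sum>j\<le>a. \<Sum>k\<le>b. ?c j k * (if int k - int j = 0 then complex_of_real (2* pi) else 0))
      = (2* pi) * (\<Sum>j\<le>a. (-1)^j * of_nat (a choose j) * of_nat (b choose j))"
  proof -
    have "(\<Sum>j\<le>a. \<Sum>k\<le>b. ?c j k * (if int k - int j = 0 then complex_of_real (2* pi) else 0))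
        = (\<Sum>j\<le>a. \<Sum>k\<le>b. (if k = j then ?c j k * complex_of_real (2* pi) else 0))"
      by (intro sum.cong refl) auto
    also have "\<dots> = (\<Sum>j\<le>a. (if j \<le> b then ?c j j * complex_of_real (2* pi) else 0))"
      by (intro sum.cong refl) (simp add: sum.delta')
    also have "\<dots> = (\<Sum>j\<le>a. complex_of_real (2* pi) * ((-1)^j * of_nat (a choose j) * of_nat (b choose j)))"
    proof (intro sum.cong refl)
      fix j
      have "of_real (inverse r) ^ j * of_real (-r) ^ j = ((-1)^j :: complex)"
        using assms by (simp add: power_mult_distrib[symmetric] flip: of_real_mult of_real_power)
      then show "(if j \<le> b then ?c j j * complex_of_real (2* pi) else 0) = complex_of_real (2* pi) * ((-1)^j * of_nat (a choose j) * of_nat (b choose j))"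
        by (auto simp: algebra_simps)
    qed
    finally show ?thesis by (simp add: sum_distrib_left)
  qed
  ultimately show ?thesis unfolding ker_expand[abs_def] by simp
qed

definition Ssum :: "nat \<Rightarrow> nat \<Rightarrow> real" where
  "Ssum a b = (\<Sum>j\<le>a. (-1)^j * real (a choose j) * real (b choose j))"

lemma c_coeff_r_eq:
  assumes "r > 0"
  shows "c_coeff_r r l p = complex_of_real (2 powr (-l) * Ssum (nat \<lfloor>l-p\<rfloor>) (nat \<lfloor>l+p\<rfloor>))"
proof -
  have "integral {0..2* pi} (ker r (nat \<lfloor>l-p\<rfloor>) (nat \<lfloor>l+p\<rfloor>)) = complex_of_real (2* pi* Ssum (nat \<lfloor>l-p\<rfloor>) (nat \<lfloor>l+p\<rfloor>))"
    unfolding Ssum_def by (rule integral_unique[OF ker_has_integral[OF assms]])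
  then show ?thesis unfolding c_coeff_r_def ker_def[abs_def] by simp
qed

lemma c_coeff_eq: "c_coeff l p = complex_of_real (2 powr (-l) * Ssum (nat \<lfloor>l-p\<rfloor>) (nat \<lfloor>l+p\<rfloor>))"
  unfolding c_coeff_def by (rule c_coeff_r_eq) simp

lemma ker_cont: "continuous_on S (ker r a b)"
  unfolding ker_def[abs_def] by (intro continuous_intros)

lemma c_bound_integral:
  assumes r: "r > 0" and g: "g integrable_on {0..2* pi}"
    and le: "\<And>\<phi>. \<phi> \<in> {0..2* pi} \<Longrightarrow> 2 powr (-l) * cmod (ker r (nat \<lfloor>l-p\<rfloor>) (nat \<lfloor>l+p\<rfloor>) \<phi>) \<le> g \<phi>"
  shows "cmod (c_coeff l p) \<le> integral {0..2* pi} g / (2* pi)"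
proof -
  let ?k = "ker r (nat \<lfloor>l-p\<rfloor>) (nat \<lfloor>l+p\<rfloor>)"
  have "c_coeff l p = c_coeff_r r l p" using c_coeff_eq c_coeff_r_eq[OF r] by simp
  also have "\<dots> = integral {0..2* pi} (\<lambda>\<phi>. complex_of_real (2 powr (-l)) * ?k \<phi>) / complex_of_real (2* pi)"
    unfolding c_coeff_r_def ker_def[abs_def] by (simp add: integral_mult_right)
  finally have eq: "c_coeff l p = integral {0..2* pi} (\<lambda>\<phi>. complex_of_real (2 powr (-l)) * ?k \<phi>) / complex_of_real (2* pi)" .
  have int: "(\<lambda>\<phi>. complex_of_real (2 powr (-l)) * ?k \<phi>) integrable_on {0..2* pi}"
    by (intro integrable_continuous_interval continuous_intros ker_cont)
  have "norm (integral {0..2* pi} (\<lambda>\<phi>. complex_of_real (2 powr (-l)) * ?k \<phi>)) \<le> integral {0..2* pi} g"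
    by (rule integral_norm_bound_integral[OF int g]) (use le in \<open>auto simp: norm_mult\<close>)
  then show ?thesis unfolding eq by (simp add: norm_divide divide_right_mono)
qed


lemma cmod_sq1: "cmod (1 + complex_of_real \<rho> * cis (- \<phi>)) ^ 2 = 1 + \<rho>^2 + 2* \<rho>* cos \<phi>"
proof -
  have "cmod (1 + complex_of_real \<rho> * cis (- \<phi>)) ^ 2 = (1 + \<rho> * cos \<phi>)^2 + (\<rho> * sin \<phi>)^2"
    by (simp add: cmod_power2)
  also have "\<dots> = 1 + \<rho>^2 * (sin \<phi>^2 + cos \<phi>^2) + 2* \<rho>* cos \<phi>" by algebra
  finally show ?thesis by (simp only: sin_cos_squared_add mult_1_right)
qed

lemma cmod_sq2: "cmod (1 - complex_of_real r * cis \<phi>) ^ 2 = 1 + r^2 - 2* r* cos \<phi>"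
proof -
  have "cmod (1 - complex_of_real r * cis \<phi>) ^ 2 = (1 - r * cos \<phi>)^2 + (r * sin \<phi>)^2"
    by (simp add: cmod_power2)
  also have "\<dots> = 1 + r^2 * (sin \<phi>^2 + cos \<phi>^2) - 2* r* cos \<phi>" by algebra
  finally show ?thesis by (simp only: sin_cos_squared_add mult_1_right)
qed

lemma ker_pointwise:
  fixes a b :: nat and \<phi> :: real
  assumes ab: "a \<ge> 1" "b \<ge> 1"
  shows "2 powr (-((real a + real b)/2)) * cmod (ker (sqrt (real a / real b)) a b \<phi>)
     \<le> exp (- (real a * real b / (4 * (real a + real b))) * (cos \<phi> - (real a - real b) / (2 * sqrt (real a * real b)))^2)"
proof -
  define n where "n = real a + real b"
  define q where "q = sqrt (real a * real b)"
  define v where "v = (real a - real b) / (2* q)"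
  define K where "K = real a * real b / (4* n)"
  define u where "u = cos \<phi>"
  define r where "r = sqrt (real a / real b)"
  have a0: "real a > 0" and b0: "real b > 0" using ab by auto
  have n0: "n > 0" unfolding n_def using a0 b0 by simp
  have q0: "q > 0" unfolding q_def using a0 b0 by simp
  have qq: "q^2 = real a * real b" unfolding q_def using a0 b0 by simp
  have r0: "r > 0" unfolding r_def using a0 b0 by simp
  have rr: "r^2 = real a / real b" unfolding r_def using a0 b0 by simp
  have u1: "\<bar>u\<bar> \<le> 1" unfolding u_def by simp
  have qn: "2* q \<le> n"
  proof -
    have "0 \<le> (sqrt (real a) - sqrt (real b))^2" by simp
    also have "\<dots> = n - 2* q" unfolding n_def q_def using a0 b0
      by (simp add: power2_diff real_sqrt_mult)
    finally show ?thesis by simp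
  qed
  have rq: "r = q / real b" unfolding r_def q_def using a0 b0
    by (simp add: real_sqrt_mult real_sqrt_divide field_simps)
  have irq: "inverse r = q / real a" unfolding r_def q_def using a0 b0
    by (simp add: real_sqrt_mult real_sqrt_divide field_simps)
  have v2: "2* q* v = real a - real b" unfolding v_def using q0 by simp
  define X1 where "X1 = (n + 2* q* u) / (2 * real a)"
  define X2 where "X2 = (n - 2* q* u) / (2 * real b)"
  have N1: "cmod (1 + complex_of_real (inverse r) * cis (- \<phi>)) ^ 2 = 2 * X1"
  proof -
    have "cmod (1 + complex_of_real (inverse r) * cis (- \<phi>)) ^ 2 = 1 + (q/real a)^2 + 2*(q/real a)* u"
      unfolding cmod_sq1 irq u_def ..
    also have "\<dots> = 2 * X1" unfolding X1_def n_def using a0 qq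
      by (simp add: field_simps power2_eq_square)
    finally show ?thesis .
  qed
  have N2: "cmod (1 - complex_of_real r * cis \<phi>) ^ 2 = 2 * X2"
  proof -
    have "cmod (1 - complex_of_real r * cis \<phi>) ^ 2 = 1 + (q/real b)^2 - 2*(q/real b)* u"
      unfolding cmod_sq2 rq u_def ..
    also have "\<dots> = 2 * X2" unfolding X2_def n_def using b0 qq
      by (simp add: field_simps power2_eq_square)
    finally show ?thesis .
  qed
  define S where "S = 2 powr (-(n/2)) * cmod (ker r a b \<phi>)"
  have S0: "S \<ge> 0" unfolding S_def by simp
  have "S^2 = (2 powr (-(n/2)))^2 * (cmod (1 + complex_of_real (inverse r) * cis (- \<phi>)) ^ 2) ^ a * (cmod (1 - complex_of_real r * cis \<phi>) ^ 2) ^ b"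
    unfolding S_def ker_def by (simp add: norm_mult norm_power power_mult_distrib power_mult[symmetric] mult.commute)
  also have "(2 powr (-(n/2)))^2 = (1/2)^a * (1/2)^b"
  proof -
    have "(2 powr (-(n/2)))^2 = 2 powr (-(n/2)) * 2 powr (-(n/2))" by (simp add: power2_eq_square)
    also have "\<dots> = 2 powr (-n)" by (simp add: powr_add[symmetric])
    also have "\<dots> = inverse (2 powr n)" by (rule powr_minus)
    also have "\<dots> = inverse (2 powr real (a+b))" unfolding n_def by simp
    also have "2 powr real (a+b) = 2^(a+b)" by (rule powr_realpow) simp
    also have "inverse ((2::real)^(a+b)) = (1/2)^a * (1/2)^b" by (simp add: power_add power_one_over field_simps)
    finally show ?thesis .
  qed
  finally have "S^2 = (1/2)^a * (1/2)^b * (2* X1)^a * (2* X2)^b" unfolding N1 N2 .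
  also have "\<dots> = ((1/2) * 2 * X1)^a * ((1/2) * 2 * X2)^b" by (simp only: power_mult_distrib ac_simps)
  also have "\<dots> = X1^a * X2^b" by simp
  finally have S2: "S^2 = X1^a * X2^b" .
  define y1 where "y1 = q*(u-v)/real a"
  define y2 where "y2 = -q*(u-v)/real b"
  have e1: "n + 2* q* u = 2* real a + 2* q*(u-v)" using v2 unfolding n_def by (simp add: algebra_simps)
  have e2: "n - 2* q* u = 2* real b - 2* q*(u-v)" using v2 unfolding n_def by (simp add: algebra_simps)
  have X1y: "X1 = 1 + y1" unfolding X1_def y1_def e1 using a0 by (simp add: add_divide_distrib)
  have X2y: "X2 = 1 + y2" unfolding X2_def y2_def e2 using b0 by (simp add: diff_divide_distrib)
  have qu: "\<bar>2* q* u\<bar> \<le> n"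
  proof -
    have "\<bar>2* q* u\<bar> = 2* q* \<bar>u\<bar>" using q0 by (simp add: abs_mult)
    also have "\<dots> \<le> 2* q*1" using u1 q0 by (intro mult_left_mono) auto
    finally show ?thesis using qn by simp
  qed
  have quu: "- n \<le> 2* q* u" "2* q* u \<le> n" using qu unfolding abs_le_iff by linarith+
  have X1b: "0 \<le> 1 + y1" "1 + y1 \<le> n / real a"
  proof -
    show "0 \<le> 1 + y1" unfolding X1y[symmetric] X1_def using quu a0 by (intro divide_nonneg_pos) auto
    have "(n + 2* q* u) / (2 * real a) \<le> (2* n) / (2 * real a)" using quu a0 by (intro divide_right_mono) auto
    then show "1 + y1 \<le> n / real a" unfolding X1y[symmetric] X1_def by simp
  qed
  have X2b: "0 \<le> 1 + y2" "1 + y2 \<le> n / real b"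
  proof -
    show "0 \<le> 1 + y2" unfolding X2y[symmetric] X2_def using quu b0 by (intro divide_nonneg_pos) auto
    have "(n - 2* q* u) / (2 * real b) \<le> (2* n) / (2 * real b)" using quu b0 by (intro divide_right_mono) auto
    then show "1 + y2 \<le> n / real b" unfolding X2y[symmetric] X2_def by simp
  qed
  have M1: "1 \<le> n / real a" using a0 b0 unfolding n_def by (simp add: field_simps)
  have M2: "1 \<le> n / real b" using a0 b0 unfolding n_def by (simp add: field_simps)
  have "S^2 \<le> exp (real a * (y1 - y1^2 / (2*(n/real a)^2))) * exp (real b * (y2 - y2^2 / (2*(n/real b)^2)))"
    unfolding S2 X1y X2y
    by (intro mult_mono quad_bound X1b X2b M1 M2) (use X1b X2b in auto)
  also have "\<dots> = exp (real a * (y1 - y1^2 / (2*(n/real a)^2)) + real b * (y2 - y2^2 / (2*(n/real b)^2)))"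
    by (simp add: exp_add)
  also have "real a * (y1 - y1^2 / (2*(n/real a)^2)) + real b * (y2 - y2^2 / (2*(n/real b)^2)) = 2 * (- K * (u - v)^2)"
  proof -
    define w where "w = u - v"
    have e1: "real a * (y1 - y1^2 / (2*(n/real a)^2)) = q* w - real a * q^2 * w^2 / (2* n^2)"
      unfolding y1_def w_def[symmetric] using a0 n0 by (simp add: field_simps power2_eq_square)
    have e2: "real b * (y2 - y2^2 / (2*(n/real b)^2)) = - q* w - real b * q^2 * w^2 / (2* n^2)"
      unfolding y2_def w_def[symmetric] using b0 n0 by (simp add: field_simps power2_eq_square)
    have "q* w - real a * q^2 * w^2 / (2* n^2) + (- q* w - real b * q^2 * w^2 / (2* n^2)) = - (real a + real b) * q^2 * w^2 / (2* n^2)"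
      using n0 by (simp add: field_simps)
    also have "\<dots> = - ((q^2) * (w^2)) / (2* n)" unfolding n_def[symmetric] using n0 by (simp add: power2_eq_square)
    also have "\<dots> = 2 * (- K * w^2)" unfolding K_def qq using n0 by simp
    finally show ?thesis unfolding e1 e2 w_def .
  qed
  also have "exp (2 * (- K * (u - v)^2)) = (exp (- K * (u - v)^2))^2"
    by (rule exp_double)
  finally have SS: "S^2 \<le> (exp (- K * (u - v)^2))^2" .
  have "S \<le> exp (- K * (u - v)^2)" by (rule power2_le_imp_le[OF SS]) (rule exp_ge_zero)
  then show ?thesis unfolding S_def n_def r_def K_def u_def v_def q_def .
qed


lemma sin_half_lower: fixes t :: real assumes "0 \<le> t" "t \<le> pi/2" shows "t/2 \<le> sin t"
proof -
  define h where "h x = sin x - x/2" for x :: real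
  have D: "DERIV h x :> cos x - 1/2" for x unfolding h_def by (auto intro!: derivative_eq_intros)
  show ?thesis
  proof (cases "t \<le> pi/3")
    case True
    have "h 0 \<le> h t"
    proof (rule DERIV_nonneg_imp_nondecreasing[OF assms(1)])
      fix x assume x: "0 \<le> x" "x \<le> t"
      have "cos (pi/3) \<le> cos x" using x True by (intro cos_monotone_0_pi_le) auto
      then show "\<exists>y. DERIV h x :> y \<and> 0 \<le> y" by (intro exI[of _ "cos x - 1/2"]) (use D in \<open>auto simp: cos_60\<close>)
    qed
    then show ?thesis by (simp add: h_def)
  next
    case False
    have "h (pi/2) \<le> h t"
    proof (rule DERIV_nonpos_imp_nonincreasing[OF assms(2)])
      fix x assume x: "t \<le> x" "x \<le> pi/2"
      have "cos x \<le> cos (pi/3)" using x False by (intro cos_monotone_0_pi_le) auto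
      then show "\<exists>y. DERIV h x :> y \<and> y \<le> 0" by (intro exI[of _ "cos x - 1/2"]) (use D in \<open>auto simp: cos_60\<close>)
    qed
    moreover have "h (pi/2) \<ge> 0" unfolding h_def using pi_less_4 by simp
    ultimately show ?thesis by (simp add: h_def)
  qed
qed

lemma sin_sq_lower: fixes t :: real assumes "\<bar>t\<bar> \<le> pi/2" shows "t^2/4 \<le> sin t ^ 2"
proof (cases "t \<ge> 0")
  case True
  then have "t/2 \<le> sin t" using sin_half_lower assms by auto
  then have "(t/2)^2 \<le> sin t ^ 2" using True by (intro power_mono) auto
  then show ?thesis by (simp add: power_divide)
next
  case False
  then have "-t/2 \<le> sin (-t)" using sin_half_lower[of "-t"] assms by auto
  then have "(-t/2)^2 \<le> sin (-t) ^ 2" using False by (intro power_mono) auto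
  then show ?thesis by (simp add: power_divide)
qed

lemma arctan_bump:
  fixes M e :: real assumes M: "M > 0"
  shows "((\<lambda>x. 1 / (1 + M * (x - e)^2)) has_integral (arctan (sqrt M * (2* pi - e)) - arctan (sqrt M * (0 - e))) / sqrt M) {0..2* pi}"
proof -
  have "((\<lambda>x. arctan (sqrt M * (x - e)) / sqrt M) has_real_derivative 1 / (1 + M * (x - e)^2)) (at x within {0..2* pi})" for x
    using M by (auto intro!: derivative_eq_intros simp: power_mult_distrib divide_simps)
  then have "((\<lambda>x. 1 / (1 + M * (x - e)^2)) has_integral (arctan (sqrt M * (2* pi - e)) / sqrt M - arctan (sqrt M * (0 - e)) / sqrt M)) {0..2* pi}"
    by (intro fundamental_theorem_of_calculus) (auto simp: has_real_derivative_iff_has_vector_derivative[symmetric])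
  then show ?thesis by (simp add: diff_divide_distrib)
qed

lemma arctan_bump_le:
  fixes M e :: real assumes M: "M > 0"
  shows "(arctan (sqrt M * (2* pi - e)) - arctan (sqrt M * (0 - e))) / sqrt M \<le> pi / sqrt M"
proof -
  have "arctan (sqrt M * (2* pi - e)) - arctan (sqrt M * (0 - e)) \<le> pi"
    using arctan_ubound[of "sqrt M * (2* pi - e)"] arctan_lbound[of "sqrt M * (0 - e)"] by linarith
  then show ?thesis using M by (intro divide_right_mono) auto
qed

lemma bump_int:
  fixes N c :: real assumes N: "N > 0" and c: "-pi \<le> c" "c \<le> pi"
  shows "(\<lambda>\<phi>. 1 / (1 + N * sin ((\<phi> - c)/2)^2)) integrable_on {0..2* pi}"
    and "integral {0..2* pi} (\<lambda>\<phi>. 1 / (1 + N * sin ((\<phi> - c)/2)^2)) \<le> 8* pi / sqrt N"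
proof -
  let ?f = "\<lambda>\<phi>. 1 / (1 + N * sin ((\<phi> - c)/2)^2)"
  define M where "M = N/16"
  have M: "M > 0" unfolding M_def using N by simp
  let ?g = "\<lambda>\<phi>. 1 / (1 + M * (\<phi> - c)^2) + 1 / (1 + M * (\<phi> - (c + 2* pi))^2)"
  have pos: "1 + N * s^2 \<noteq> 0" for s
  proof -
    have "0 < 1 + N * s^2" using N by (intro add_pos_nonneg) auto
    then show ?thesis by simp
  qed
  show int: "?f integrable_on {0..2* pi}"
    by (intro integrable_continuous_interval continuous_intros) (use pos in auto)
  have g: "(?g has_integral ((arctan (sqrt M * (2* pi - c)) - arctan (sqrt M * (0 - c))) / sqrt M +
      (arctan (sqrt M * (2* pi - (c+2* pi))) - arctan (sqrt M * (0 - (c+2* pi)))) / sqrt M)) {0..2* pi}"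
    by (intro has_integral_add arctan_bump M)
  have le: "?f \<phi> \<le> ?g \<phi>" if "\<phi> \<in> {0..2* pi}" for \<phi>
  proof -
    define y where "y = (\<phi> - c)/2"
    have y: "-pi/2 \<le> y" "y \<le> 3* pi/2" using that c unfolding y_def by auto
    have pos1: "0 < 1 + M * (\<phi> - c)^2" "0 < 1 + M * (\<phi> - (c + 2* pi))^2" using M by (auto intro: add_pos_nonneg)
    show ?thesis
    proof (cases "y \<le> pi/2")
      case True
      have "y^2/4 \<le> sin y ^ 2" using True y by (intro sin_sq_lower) auto
      then have "M * (\<phi> - c)^2 \<le> N * sin y ^ 2" unfolding M_def y_def using N
        by (simp add: power_divide field_simps)
      then have "?f \<phi> \<le> 1 / (1 + M * (\<phi> - c)^2)" unfolding y_def[symmetric]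
        using pos1 by (intro divide_left_mono) auto
      moreover have "0 \<le> 1 / (1 + M * (\<phi> - (c + 2* pi))^2)" using pos1 by simp
      ultimately show ?thesis by linarith
    next
      case False
      have "\<bar>y - pi\<bar> \<le> pi/2" using False y unfolding abs_le_iff by linarith
      then have "(y - pi)^2/4 \<le> sin (y - pi) ^ 2" by (intro sin_sq_lower)
      also have "sin (y - pi) ^ 2 = sin y ^ 2" by (simp add: sin_diff)
      finally have "M * (\<phi> - (c + 2* pi))^2 \<le> N * sin y ^ 2" unfolding M_def y_def using N
        by (simp add: power_divide field_simps)
      then have "?f \<phi> \<le> 1 / (1 + M * (\<phi> - (c + 2* pi))^2)" unfolding y_def[symmetric]
        using pos1 by (intro divide_left_mono) auto
      moreover have "0 \<le> 1 / (1 + M * (\<phi> - c)^2)" using pos1 by simp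
      ultimately show ?thesis by linarith
    qed
  qed
  have "integral {0..2* pi} ?f \<le> (arctan (sqrt M * (2* pi - c)) - arctan (sqrt M * (0 - c))) / sqrt M +
      (arctan (sqrt M * (2* pi - (c+2* pi))) - arctan (sqrt M * (0 - (c+2* pi)))) / sqrt M"
    using integral_le[OF int has_integral_integrable[OF g] le] integral_unique[OF g] by simp
  also have "\<dots> \<le> pi / sqrt M + pi / sqrt M" by (intro add_mono arctan_bump_le M)
  also have "\<dots> = 8* pi / sqrt N" unfolding M_def using N by (simp add: real_sqrt_divide)
  finally show "integral {0..2* pi} ?f \<le> 8* pi / sqrt N" .
qed

lemma exp_neg_le: fixes z :: real assumes "z \<ge> 0" shows "exp (-z) \<le> 1/(1+z)"
proof -
  have "1 + z \<le> exp z" by simp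
  then have "1 / exp z \<le> 1 / (1+z)" using assms by (intro divide_left_mono) auto
  then show ?thesis by (simp add: exp_minus field_simps)
qed

lemma quart_bound: fixes K m :: real assumes "K > 0" "m \<ge> 0"
  shows "1/(1 + 4* K* m^2) \<le> 2/(1 + 2* sqrt K* m)"
proof -
  define X where "X = 2 * sqrt K * m"
  have X0: "X \<ge> 0" unfolding X_def using assms by simp
  have XX: "X^2 = 4* K* m^2" unfolding X_def using assms by (simp add: power_mult_distrib)
  have "1 + X \<le> 2 * (1 + X^2)"
  proof -
    have "0 \<le> (X - 1/2)^2" by simp
    then have "X \<le> X* X + 1/4" by (simp add: power2_eq_square algebra_simps)
    moreover have "0 \<le> X* X" by simp
    ultimately have "1 + X \<le> 2 + 2 * (X* X)" by linarith
    then show ?thesis by (simp add: power2_eq_square)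
  qed
  then have "1/(1 + X^2) \<le> 2/(1+X)" using X0 by (simp add: field_simps add_pos_nonneg)
  then show ?thesis unfolding XX by (simp add: X_def)
qed

lemma inv_min_le: fixes \<alpha> p q :: real assumes "\<alpha> \<ge> 0" "p \<ge> 0" "q \<ge> 0"
  shows "1/(1 + \<alpha> * min p q) \<le> 1/(1 + \<alpha>* p) + 1/(1 + \<alpha>* q)"
proof -
  have a: "0 \<le> 1/(1 + \<alpha>* p)" "0 \<le> 1/(1 + \<alpha>* q)" using assms by (auto intro!: add_nonneg_nonneg)
  show ?thesis by (cases "p \<le> q") (use a in \<open>auto simp: min_def\<close>)
qed

definition bmp :: "real \<Rightarrow> real \<Rightarrow> real \<Rightarrow> real" where
  "bmp N c \<phi> = 1 / (1 + N * sin ((\<phi> - c)/2)^2)"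

definition cA :: "real \<Rightarrow> real" where
  "cA v = (if \<bar>v\<bar> \<le> 1 then arccos v else if v > 1 then 0 else pi)"
definition cB :: "real \<Rightarrow> real" where
  "cB v = (if \<bar>v\<bar> \<le> 1 then - arccos v else if v > 1 then 0 else pi)"

lemma cA_range: "-pi \<le> cA v \<and> cA v \<le> pi"
  unfolding cA_def using arccos_lbound[of v] arccos_ubound[of v] pi_gt_zero by (auto simp: abs_le_iff)
lemma cB_range: "-pi \<le> cB v \<and> cB v \<le> pi"
  unfolding cB_def using arccos_lbound[of v] arccos_ubound[of v] pi_gt_zero by (auto simp: abs_le_iff)

lemma bmp_nonneg: "N \<ge> 0 \<Longrightarrow> 0 \<le> bmp N c \<phi>"
  unfolding bmp_def by (auto intro!: add_nonneg_nonneg)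

lemma bmp_mono: assumes "0 \<le> N'" "N' \<le> N" shows "bmp N c \<phi> \<le> bmp N' c \<phi>"
proof -
  define t where "t = sin ((\<phi> - c)/2)^2"
  have t: "t \<ge> 0" unfolding t_def by simp
  have "N' * t \<le> N * t" using assms t by (intro mult_right_mono) auto
  moreover have "0 < 1 + N' * t" using assms t by (intro add_pos_nonneg) auto
  ultimately have "1 / (1 + N * t) \<le> 1 / (1 + N' * t)" by (intro divide_left_mono) auto
  then show ?thesis unfolding bmp_def t_def .
qed

lemma inside_struct:
  fixes v \<phi> :: real assumes v: "\<bar>v\<bar> \<le> 1"
  defines "sA \<equiv> sin ((\<phi> - cA v)/2)^2" and "sB \<equiv> sin ((\<phi> - cB v)/2)^2"
  shows "(cos \<phi> - v)^2 \<ge> (1 - v^2) * min sA sB" and "(cos \<phi> - v)^2 \<ge> 4 * (min sA sB)^2"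
proof -
  define \<psi> where "\<psi> = arccos v"
  have vv: "-1 \<le> v" "v \<le> 1" using v by auto
  have cp: "cos \<psi> = v" unfolding \<psi>_def using vv by simp
  have sp: "sin \<psi> ^ 2 = 1 - v^2" using cp sin_squared_eq[of \<psi>] by simp
  define A where "A = (\<phi> + \<psi>)/2"
  define B where "B = (\<phi> - \<psi>)/2"
  have sAe: "sA = sin B ^ 2" unfolding sA_def B_def cA_def \<psi>_def using v by simp
  have sBe: "sB = sin A ^ 2" unfolding sB_def A_def cB_def \<psi>_def using v by simp
  have cd: "cos \<phi> - v = - 2 * sin A * sin B"
  proof -
    have s: "sin ((\<psi> - \<phi>)/2) = - sin ((\<phi> - \<psi>)/2)" by (metis minus_diff_eq minus_divide_left sin_minus)
    show ?thesis using cos_diff_cos[of \<phi> \<psi>] cp unfolding A_def B_def s by simp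
  qed
  then have sq: "(cos \<phi> - v)^2 = 4 * sA * sB" unfolding sAe sBe by (simp add: power_mult_distrib)
  have "sin \<psi> = sin (A - B)" unfolding A_def B_def by (simp add: field_simps)
  also have "\<dots> = sin A * cos B - cos A * sin B" by (rule sin_diff)
  finally have "\<bar>sin \<psi>\<bar> \<le> \<bar>sin A\<bar> * \<bar>cos B\<bar> + \<bar>cos A\<bar> * \<bar>sin B\<bar>" by (simp add: abs_mult[symmetric] abs_triangle_ineq4)
  also have "\<dots> \<le> \<bar>sin A\<bar> + \<bar>sin B\<bar>"
    by (intro add_mono mult_right_le_one_le mult_left_le_one_le) auto
  finally have ab: "\<bar>sin \<psi>\<bar> \<le> \<bar>sin A\<bar> + \<bar>sin B\<bar>" .
  have w2: "1 - v^2 \<le> 4 * max sA sB"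
  proof -
    have "1 - v^2 = \<bar>sin \<psi>\<bar>^2" using sp by simp
    also have "\<dots> \<le> (\<bar>sin A\<bar> + \<bar>sin B\<bar>)^2" using ab by (intro power_mono) auto
    also have "\<dots> \<le> 2 * (sin A^2 + sin B^2)"
    proof -
      have "0 \<le> (\<bar>sin A\<bar> - \<bar>sin B\<bar>)^2" by simp
      then show ?thesis by (simp add: power2_eq_square algebra_simps)
    qed
    also have "\<dots> \<le> 4 * max sA sB" unfolding sAe sBe by (simp add: max_def)
    finally show ?thesis .
  qed
  have mm: "4 * sA * sB = 4 * min sA sB * max sA sB" by (simp add: min_def max_def)
  have nn: "0 \<le> min sA sB" unfolding sAe sBe by simp
  show "(cos \<phi> - v)^2 \<ge> (1 - v^2) * min sA sB"
  proof -
    have "(1 - v^2) * min sA sB \<le> 4 * max sA sB * min sA sB" using w2 nn by (intro mult_right_mono) auto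
    then show ?thesis unfolding sq mm by (simp add: ac_simps)
  qed
  show "(cos \<phi> - v)^2 \<ge> 4 * (min sA sB)^2"
  proof -
    have "min sA sB \<le> max sA sB" by simp
    then have "4 * (min sA sB)^2 \<le> 4 * min sA sB * max sA sB" using nn by (simp add: power2_eq_square mult_left_mono)
    then show ?thesis unfolding sq mm .
  qed
qed


lemma outside_struct:
  fixes v \<phi> :: real assumes v: "\<bar>v\<bar> > 1"
  shows "(cos \<phi> - v)^2 = ((\<bar>v\<bar> - 1) + 2 * sin ((\<phi> - cA v)/2)^2)^2" and "cB v = cA v"
proof -
  show "cB v = cA v" unfolding cA_def cB_def using v by auto
  show "(cos \<phi> - v)^2 = ((\<bar>v\<bar> - 1) + 2 * sin ((\<phi> - cA v)/2)^2)^2"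
  proof (cases "v > 1")
    case True
    have c: "cos \<phi> = 1 - 2 * sin (\<phi>/2)^2" using cos_double_sin[of "\<phi>/2"] by simp
    have "(cos \<phi> - v)^2 = (v - cos \<phi>)^2" by (simp add: power2_commute)
    also have "v - cos \<phi> = (\<bar>v\<bar> - 1) + 2 * sin ((\<phi> - cA v)/2)^2" unfolding c cA_def using True by simp
    finally show ?thesis .
  next
    case False
    then have vn: "v < -1" using v by auto
    have c: "cos \<phi> = -1 + 2 * sin ((\<phi> - pi)/2)^2"
    proof -
      have e: "2 * ((\<phi> - pi)/2) = \<phi> - pi" by simp
      have "cos (\<phi> - pi) = - cos \<phi>" by (simp add: cos_diff)
      then have "cos (2 * ((\<phi> - pi)/2)) = - cos \<phi>" by (simp only: e)
      then have "cos \<phi> = - cos (2 * ((\<phi> - pi)/2))" by simp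
      then show ?thesis using cos_double_sin[of "(\<phi> - pi)/2"] by simp
    qed
    have "cos \<phi> - v = (\<bar>v\<bar> - 1) + 2 * sin ((\<phi> - cA v)/2)^2" unfolding c cA_def using vn by simp
    then show ?thesis by simp
  qed
qed

lemma G_B1:
  fixes K v \<phi> :: real assumes K: "K > 0"
  shows "exp (- K * (cos \<phi> - v)^2) \<le> 2 * bmp (2 * sqrt K) (cA v) \<phi> + 2 * bmp (2 * sqrt K) (cB v) \<phi>"
proof -
  have key: "exp (- K * (cos \<phi> - v)^2) \<le> 2 / (1 + 2 * sqrt K * m)" if m: "m \<ge> 0" "(cos \<phi> - v)^2 \<ge> 4 * m^2" for m
  proof -
    have "exp (- K * (cos \<phi> - v)^2) \<le> exp (- (4 * K * m^2))" using m K by (simp add: mult_left_mono)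
    also have "\<dots> \<le> 1 / (1 + 4 * K * m^2)" using K by (intro exp_neg_le) simp
    also have "\<dots> \<le> 2 / (1 + 2 * sqrt K * m)" using K m by (intro quart_bound)
    finally show ?thesis .
  qed
  have nn: "0 \<le> bmp (2 * sqrt K) c \<phi>" for c using K by (intro bmp_nonneg) simp
  show ?thesis
  proof (cases "\<bar>v\<bar> \<le> 1")
    case True
    define sA where "sA = sin ((\<phi> - cA v)/2)^2"
    define sB where "sB = sin ((\<phi> - cB v)/2)^2"
    have "exp (- K * (cos \<phi> - v)^2) \<le> 2 / (1 + 2 * sqrt K * min sA sB)"
      using inside_struct(2)[OF True, of \<phi>] unfolding sA_def sB_def by (intro key) auto
    also have "\<dots> = 2 * (1 / (1 + 2 * sqrt K * min sA sB))" by simp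
    also have "\<dots> \<le> 2 * (1 / (1 + 2 * sqrt K * sA) + 1 / (1 + 2 * sqrt K * sB))"
      using K unfolding sA_def sB_def by (intro mult_left_mono inv_min_le) auto
    finally show ?thesis unfolding bmp_def sA_def sB_def by (simp add: algebra_simps)
  next
    case False
    then have v: "\<bar>v\<bar> > 1" by simp
    define S where "S = sin ((\<phi> - cA v)/2)^2"
    have S0: "S \<ge> 0" unfolding S_def by simp
    have "4 * S^2 \<le> ((\<bar>v\<bar> - 1) + 2 * S)^2"
    proof -
      have "2 * S \<le> (\<bar>v\<bar> - 1) + 2 * S" using v by simp
      then have "(2* S)^2 \<le> ((\<bar>v\<bar> - 1) + 2 * S)^2" using S0 by (intro power_mono) auto
      then show ?thesis by (simp add: power_mult_distrib)
    qed
    then have "exp (- K * (cos \<phi> - v)^2) \<le> 2 / (1 + 2 * sqrt K * S)"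
      using outside_struct(1)[OF v, of \<phi>] S0 unfolding S_def by (intro key) auto
    also have "\<dots> = 2 * bmp (2 * sqrt K) (cA v) \<phi>" unfolding bmp_def S_def by simp
    finally show ?thesis using nn[of "cB v"] by linarith
  qed
qed

lemma G_B2:
  fixes K v \<phi> :: real assumes K: "K > 0" and v3: "\<bar>v\<bar> \<le> 3"
  shows "exp (- K * (cos \<phi> - v)^2) \<le> bmp (K * \<bar>1 - v^2\<bar>) (cA v) \<phi> + bmp (K * \<bar>1 - v^2\<bar>) (cB v) \<phi>"
proof -
  define N where "N = K * \<bar>1 - v^2\<bar>"
  have N0: "N \<ge> 0" unfolding N_def using K by simp
  have key: "exp (- K * (cos \<phi> - v)^2) \<le> 1 / (1 + N * m)" if m: "m \<ge> 0" "(cos \<phi> - v)^2 \<ge> \<bar>1 - v^2\<bar> * m" for m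
  proof -
    have "exp (- K * (cos \<phi> - v)^2) \<le> exp (- (N * m))" using m K unfolding N_def by (simp add: mult_left_mono)
    also have "\<dots> \<le> 1 / (1 + N * m)" using N0 m by (intro exp_neg_le) simp
    finally show ?thesis .
  qed
  have nn: "0 \<le> bmp N c \<phi>" for c using N0 by (intro bmp_nonneg)
  show ?thesis unfolding N_def[symmetric]
  proof (cases "\<bar>v\<bar> \<le> 1")
    case True
    define sA where "sA = sin ((\<phi> - cA v)/2)^2"
    define sB where "sB = sin ((\<phi> - cB v)/2)^2"
    have "v^2 \<le> 1" using True abs_square_le_1[of v] by simp
    then have vv: "\<bar>1 - v^2\<bar> = 1 - v^2" by simp
    have "(cos \<phi> - v)^2 \<ge> \<bar>1 - v^2\<bar> * min sA sB"
      using inside_struct(1)[OF True, of \<phi>] unfolding sA_def sB_def vv .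
    then have "exp (- K * (cos \<phi> - v)^2) \<le> 1 / (1 + N * min sA sB)"
      unfolding sA_def sB_def by (intro key) auto
    also have "\<dots> \<le> 1 / (1 + N * sA) + 1 / (1 + N * sB)"
      using N0 unfolding sA_def sB_def by (intro inv_min_le) auto
    finally show "exp (- K * (cos \<phi> - v)^2) \<le> bmp N (cA v) \<phi> + bmp N (cB v) \<phi>" unfolding bmp_def sA_def sB_def .
  next
    case False
    then have v: "\<bar>v\<bar> > 1" by simp
    define S where "S = sin ((\<phi> - cA v)/2)^2"
    define d where "d = \<bar>v\<bar> - 1"
    have S0: "S \<ge> 0" unfolding S_def by simp
    have d0: "d > 0" unfolding d_def using v by simp
    have vv: "\<bar>1 - v^2\<bar> = d * (\<bar>v\<bar> + 1)"
    proof -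
      have "v^2 = \<bar>v\<bar>^2" by simp
      moreover have "1 < \<bar>v\<bar>^2" using less_1_mult[OF v v] by (simp add: power2_eq_square)
      ultimately show ?thesis unfolding d_def by (simp add: power2_eq_square algebra_simps)
    qed
    have "\<bar>1 - v^2\<bar> * S \<le> ((\<bar>v\<bar> - 1) + 2 * S)^2"
    proof -
      have "\<bar>1 - v^2\<bar> * S \<le> (8 * d) * S" unfolding vv using v3 d0 S0 by (intro mult_right_mono) auto
      also have "\<dots> \<le> (d + 2 * S)^2"
      proof -
        have "(d + 2 * S)^2 = (d - 2* S)^2 + (8 * d) * S" by (simp add: power2_eq_square algebra_simps)
        moreover have "0 \<le> (d - 2* S)^2" by simp
        ultimately show ?thesis by linarith
      qed
      finally show ?thesis unfolding d_def .
    qed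
    then have "exp (- K * (cos \<phi> - v)^2) \<le> 1 / (1 + N * S)"
      using outside_struct(1)[OF v, of \<phi>] S0 unfolding S_def by (intro key) auto
    also have "\<dots> = bmp N (cA v) \<phi>" unfolding bmp_def S_def by simp
    finally show "exp (- K * (cos \<phi> - v)^2) \<le> bmp N (cA v) \<phi> + bmp N (cB v) \<phi>" using nn[of "cB v"] by linarith
  qed
qed

lemma bmp_int:
  assumes "N > 0" "-pi \<le> c" "c \<le> pi"
  shows "bmp N c integrable_on {0..2* pi}" "integral {0..2* pi} (bmp N c) \<le> 8* pi / sqrt N"
  using bump_int[OF assms] unfolding bmp_def[abs_def] by auto

lemma G_cont: fixes K v :: real and S :: "real set" shows "continuous_on S (\<lambda>\<phi>. exp (- K * (cos \<phi> - v)^2))"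
  by (intro continuous_intros)

lemma G_int1:
  fixes K v :: real assumes K: "K > 0"
  shows "integral {0..2* pi} (\<lambda>\<phi>. exp (- K * (cos \<phi> - v)^2)) \<le> 32* pi / sqrt (2 * sqrt K)"
proof -
  define N where "N = 2 * sqrt K"
  have N: "N > 0" unfolding N_def using K by simp
  have iA: "bmp N (cA v) integrable_on {0..2* pi}" "integral {0..2* pi} (bmp N (cA v)) \<le> 8* pi / sqrt N"
    using bmp_int[OF N] cA_range[of v] by auto
  have iB: "bmp N (cB v) integrable_on {0..2* pi}" "integral {0..2* pi} (bmp N (cB v)) \<le> 8* pi / sqrt N"
    using bmp_int[OF N] cB_range[of v] by auto
  let ?h = "\<lambda>\<phi>. 2 * bmp N (cA v) \<phi> + 2 * bmp N (cB v) \<phi>"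
  have hi: "?h integrable_on {0..2* pi}" using iA iB by (intro integrable_add integrable_cmul) auto
  have "integral {0..2* pi} (\<lambda>\<phi>. exp (- K * (cos \<phi> - v)^2)) \<le> integral {0..2* pi} ?h"
    by (intro integral_le integrable_continuous_interval G_cont hi) (use G_B1[OF K] in \<open>auto simp: N_def\<close>)
  also have "integral {0..2* pi} ?h = 2 * integral {0..2* pi} (bmp N (cA v)) + 2 * integral {0..2* pi} (bmp N (cB v))"
    using iA iB by (simp add: integral_add integrable_cmul)
  also have "\<dots> \<le> 2 * (8* pi / sqrt N) + 2 * (8* pi / sqrt N)" using iA iB by linarith
  finally show ?thesis unfolding N_def by simp
qed

lemma G_int2:
  fixes K v :: real assumes K: "K > 0" and v3: "\<bar>v\<bar> \<le> 3" and v1: "v^2 \<noteq> 1"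
  shows "integral {0..2* pi} (\<lambda>\<phi>. exp (- K * (cos \<phi> - v)^2)) \<le> 16* pi / sqrt (K * \<bar>1 - v^2\<bar>)"
proof -
  define N where "N = K * \<bar>1 - v^2\<bar>"
  have N: "N > 0" unfolding N_def using K v1 by simp
  have iA: "bmp N (cA v) integrable_on {0..2* pi}" "integral {0..2* pi} (bmp N (cA v)) \<le> 8* pi / sqrt N"
    using bmp_int[OF N] cA_range[of v] by auto
  have iB: "bmp N (cB v) integrable_on {0..2* pi}" "integral {0..2* pi} (bmp N (cB v)) \<le> 8* pi / sqrt N"
    using bmp_int[OF N] cB_range[of v] by auto
  let ?h = "\<lambda>\<phi>. bmp N (cA v) \<phi> + bmp N (cB v) \<phi>"
  have hi: "?h integrable_on {0..2* pi}" using iA iB by (intro integrable_add) auto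
  have "integral {0..2* pi} (\<lambda>\<phi>. exp (- K * (cos \<phi> - v)^2)) \<le> integral {0..2* pi} ?h"
    by (intro integral_le integrable_continuous_interval G_cont hi) (use G_B2[OF K v3] in \<open>auto simp: N_def\<close>)
  also have "integral {0..2* pi} ?h = integral {0..2* pi} (bmp N (cA v)) + integral {0..2* pi} (bmp N (cB v))"
    using iA iB by (simp add: integral_add)
  also have "\<dots> \<le> 8* pi / sqrt N + 8* pi / sqrt N" using iA iB by linarith
  finally show ?thesis unfolding N_def by simp
qed


lemma Ssum_le: "\<bar>Ssum a b\<bar> \<le> real ((a+b) choose a)"
proof -
  have "\<bar>Ssum a b\<bar> \<le> (\<Sum>j\<le>a. \<bar>(-1)^j * real (a choose j) * real (b choose j)\<bar>)"
    unfolding Ssum_def by (rule sum_abs)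
  also have "\<dots> = (\<Sum>j\<le>a. real (b choose j) * real (a choose (a - j)))"
    by (intro sum.cong refl) (simp add: abs_mult binomial_symmetric[symmetric])
  also have "\<dots> = real (\<Sum>j\<le>a. (b choose j) * (a choose (a - j)))" by simp
  also have "(\<Sum>j\<le>a. (b choose j) * (a choose (a - j))) = (b + a) choose a" by (rule vandermonde)
  finally show ?thesis by (simp add: add.commute)
qed

lemma choose_le_geom: "real (n choose k) \<le> 10^k * (10/9)^(n-k)"
proof (cases "k \<le> n")
  case True
  have "1 = (1/10 + 9/10 :: real)^n" by simp
  also have "\<dots> = (\<Sum>j\<le>n. real (n choose j) * (1/10)^j * (9/10)^(n-j))" by (rule binomial_ring)
  also have "\<dots> \<ge> real (n choose k) * (1/10)^k * (9/10)^(n-k)"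
    using True by (intro member_le_sum) auto
  finally have "real (n choose k) * (1/10)^k * (9/10)^(n-k) \<le> 1" .
  then show ?thesis by (simp add: field_simps power_divide)
next
  case False
  then show ?thesis by (simp add: binomial_eq_0)
qed

lemma poly_geom_bounded: "\<exists>D. \<forall>n. (1 + real n)^10 * (9/10::real)^n \<le> D"
proof -
  have "(\<lambda>n. (1 + real n)^10 * (9/10::real)^n) \<longlonglongrightarrow> 0" by real_asymp
  then have "Bseq (\<lambda>n. (1 + real n)^10 * (9/10::real)^n)" by (intro convergent_imp_Bseq convergentI)
  then obtain D where "\<And>n. norm ((1 + real n)^10 * (9/10::real)^n) \<le> D" unfolding Bseq_def by auto
  then show ?thesis by (intro exI[of _ D]) (auto simp: abs_le_iff)
qed

lemma small_side_bound:
  fixes n k :: nat assumes "10 * k \<le> n"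
  shows "((2 powr (-(real n/2)) * real (n choose k))^2)^10 \<le> (9/10)^n"
proof -
  define C where "C = real (n choose k)"
  have C0: "C \<ge> 0" unfolding C_def by simp
  have p: "(2 powr (-(real n/2)))^2 = 1 / 2^n"
  proof -
    have "(2 powr (-(real n/2)))^2 = 2 powr (-(real n/2)) * 2 powr (-(real n/2))" by (simp add: power2_eq_square)
    also have "\<dots> = 2 powr (- real n)" by (simp add: powr_add[symmetric])
    also have "\<dots> = inverse (2 powr real n)" by (rule powr_minus)
    also have "2 powr real n = 2^n" by (rule powr_realpow) simp
    finally show ?thesis by (simp add: inverse_eq_divide)
  qed
  have q: "((2::real)^n)^10 = 1024^n"
  proof -
    have "((2::real)^n)^10 = 2^(n*10)" by (rule power_mult[symmetric])
    also have "\<dots> = 2^(10* n)" by (simp only: mult.commute)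
    also have "\<dots> = (2^10)^n" by (rule power_mult)
    finally show ?thesis by simp
  qed
  have s1: "((2 powr (-(real n/2)) * C)^2)^10 = C^20 / 1024^n"
  proof -
    have "((2 powr (-(real n/2)) * C)^2)^10 = ((2 powr (-(real n/2)))^2)^10 * (C^2)^10"
      by (simp only: power_mult_distrib)
    also have "\<dots> = (1/2^n)^10 * C^20" unfolding p by (simp only: power_mult[symmetric]) simp
    also have "\<dots> = C^20 / 1024^n" unfolding power_divide q by simp
    finally show ?thesis .
  qed
  have e1: "((10::real)^k)^20 = 100^(10* k)"
  proof -
    have "((10::real)^k)^20 = 10^(k*20)" by (rule power_mult[symmetric])
    also have "k*20 = 2*(10* k)" by simp
    also have "(10::real)^(2*(10* k)) = (10^2)^(10* k)" by (rule power_mult)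
    finally show ?thesis by simp
  qed
  have e2: "((10/9::real)^(n-k))^20 = ((10/9)^20)^(n-k)"
  proof -
    have "((10/9::real)^(n-k))^20 = (10/9)^((n-k)*20)" by (rule power_mult[symmetric])
    also have "(n-k)*20 = 20*(n-k)" by simp
    also have "(10/9::real)^(20*(n-k)) = ((10/9)^20)^(n-k)" by (rule power_mult)
    finally show ?thesis .
  qed
  have s2: "C^20 \<le> 100^(10* k) * ((10/9)^20)^(n-k)"
  proof -
    have "C^20 \<le> (10^k * (10/9)^(n-k))^20" unfolding C_def using choose_le_geom[of n k]
      by (intro power_mono) auto
    also have "(10^k * (10/9)^(n-k))^20 = ((10::real)^k)^20 * ((10/9::real)^(n-k))^20"
      by (rule power_mult_distrib)
    finally show ?thesis unfolding e1 e2 .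
  qed
  have s3: "100^(10* k) * ((10/9)^20)^(n-k) \<le> (100::real)^n * 9^n"
  proof (rule mult_mono)
    show "(100::real)^(10* k) \<le> 100^n" using assms by (intro power_increasing) auto
    have "(10/9::real)^20 \<le> 9" by (simp add: power_divide)
    then have "((10/9::real)^20)^(n-k) \<le> 9^(n-k)" by (intro power_mono) auto
    also have "(9::real)^(n-k) \<le> 9^n" by (intro power_increasing) auto
    finally show "((10/9::real)^20)^(n-k) \<le> 9^n" .
  qed auto
  have s4: "(100::real)^n * 9^n / 1024^n \<le> (9/10)^n"
  proof -
    have "(100::real)^n * 9^n = 900^n" by (simp add: power_mult_distrib[symmetric])
    then have "(100::real)^n * 9^n / 1024^n = (900/1024)^n" by (simp only: power_divide)
    also have "\<dots> \<le> (9/10)^n" by (intro power_mono) auto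
    finally show ?thesis .
  qed
  have "C^20 / 1024^n \<le> (100::real)^n * 9^n / 1024^n" using s2 s3 by (intro divide_right_mono) auto
  then show ?thesis unfolding C_def[symmetric] s1 using s4 by linarith
qed

lemma R1_bound:
  "\<exists>E>0. \<forall>a b. (10 * a \<le> a + b \<or> 10 * b \<le> a + b) \<longrightarrow>
     2 powr (-(real (a+b)/2)) * \<bar>Ssum a b\<bar> \<le> E / sqrt (1 + real (a+b)/2)"
proof -
  obtain D where D: "\<And>n. (1 + real n)^10 * (9/10::real)^n \<le> D" using poly_geom_bounded by blast
  define E where "E = sqrt (max 1 D)"
  have E0: "E > 0" unfolding E_def by simp
  have main: "2 powr (-(real n/2)) * real (n choose k) \<le> E / sqrt (1 + real n/2)" if k: "10 * k \<le> n" for n k :: nat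
  proof -
    define y where "y = 2 powr (-(real n/2)) * real (n choose k)"
    have y0: "y \<ge> 0" unfolding y_def by simp
    define t where "t = y^2 * (1 + real n/2)"
    have t0: "t \<ge> 0" unfolding t_def using y0 by simp
    have "t^10 = (y^2)^10 * (1 + real n/2)^10" unfolding t_def by (simp add: power_mult_distrib)
    also have "\<dots> \<le> (9/10)^n * (1 + real n)^10"
      using small_side_bound[OF k] unfolding y_def[symmetric]
      by (intro mult_mono power_mono) auto
    also have "\<dots> \<le> D" using D[of n] by (simp add: mult.commute)
    finally have tD: "t^10 \<le> D" .
    have "t \<le> max 1 D"
    proof (cases "t \<le> 1")
      case False
      then have "t \<le> t^10" by (intro self_le_power) auto
      then show ?thesis using tD by simp
    qed simp
    then have "y^2 \<le> max 1 D / (1 + real n/2)" unfolding t_def by (simp add: field_simps add_pos_nonneg)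
    then have "sqrt (y^2) \<le> sqrt (max 1 D / (1 + real n/2))" by (rule real_sqrt_le_mono)
    then show ?thesis unfolding y_def[symmetric] E_def using y0 by (simp add: real_sqrt_divide)
  qed
  have "2 powr (-(real (a+b)/2)) * \<bar>Ssum a b\<bar> \<le> E / sqrt (1 + real (a+b)/2)"
    if ab: "10 * a \<le> a + b \<or> 10 * b \<le> a + b" for a b
  proof -
    have "2 powr (-(real (a+b)/2)) * \<bar>Ssum a b\<bar> \<le> 2 powr (-(real (a+b)/2)) * real ((a+b) choose a)"
      by (intro mult_left_mono Ssum_le) simp
    also have "\<dots> \<le> E / sqrt (1 + real (a+b)/2)"
    proof (cases "10 * a \<le> a + b")
      case True then show ?thesis by (rule main)
    next
      case False
      then have b: "10 * b \<le> a + b" using ab by simp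
      have "(a+b) choose a = (a+b) choose b" using binomial_symmetric[of a "a+b"] by simp
      then show ?thesis using main[OF b] by simp
    qed
    finally show ?thesis .
  qed
  then show ?thesis using E0 by blast
qed


lemma bound_term_nonneg: "0 \<le> bound_term l p"
  unfolding bound_term_def by simp

lemma BT_combine:
  fixes X C l p :: real
  assumes C: "C \<ge> 0"
    and h1: "X \<le> C * (1 + l) powr (-1/4)"
    and h2: "\<bar>p\<bar> \<noteq> l / sqrt 2 \<Longrightarrow> X \<le> C * \<bar>\<bar>p\<bar> - l / sqrt 2\<bar> powr (-1/2)"
  shows "X \<le> C * bound_term l p"
proof (cases "\<bar>p\<bar> = l / sqrt 2")
  case True
  then show ?thesis using h1 unfolding bound_term_def by simp
next
  case False
  then have "X \<le> min (C * (1 + l) powr (-1/4)) (C * \<bar>\<bar>p\<bar> - l / sqrt 2\<bar> powr (-1/2))"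
    using h1 h2 by simp
  also have "\<dots> = C * min ((1 + l) powr (-1/4)) (\<bar>\<bar>p\<bar> - l / sqrt 2\<bar> powr (-1/2))"
    using C by (simp add: min_mult_distrib_left)
  finally show ?thesis using False unfolding bound_term_def by simp
qed

lemma x_le_l:
  fixes l p :: real assumes "\<bar>p\<bar> \<le> l"
  shows "\<bar>\<bar>p\<bar> - l / sqrt 2\<bar> \<le> l"
proof -
  have l0: "l \<ge> 0" using assms by simp
  have s: "l / sqrt 2 \<le> l / 1" using l0 by (intro divide_left_mono) auto
  have h: "0 \<le> l / sqrt 2" using l0 by simp
  have "0 \<le> \<bar>p\<bar>" by simp
  then show ?thesis using s h assms unfolding abs_le_iff[of "\<bar>p\<bar> - l / sqrt 2"] by linarith
qed

lemma BT_half: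
  fixes l p :: real assumes "\<bar>p\<bar> \<le> l"
  shows "(1 + l) powr (-1/2) \<le> (1 + l) powr (-1/4)"
    and "\<bar>p\<bar> \<noteq> l / sqrt 2 \<Longrightarrow> (1 + l) powr (-1/2) \<le> \<bar>\<bar>p\<bar> - l / sqrt 2\<bar> powr (-1/2)"
proof -
  have l0: "l \<ge> 0" using assms by simp
  show "(1 + l) powr (-1/2) \<le> (1 + l) powr (-1/4)" using l0 by (intro powr_mono) auto
  assume ne: "\<bar>p\<bar> \<noteq> l / sqrt 2"
  have "0 < \<bar>\<bar>p\<bar> - l / sqrt 2\<bar>" using ne by simp
  moreover have "\<bar>\<bar>p\<bar> - l / sqrt 2\<bar> \<le> 1 + l" using x_le_l[OF assms] by simp
  ultimately show "(1 + l) powr (-1/2) \<le> \<bar>\<bar>p\<bar> - l / sqrt 2\<bar> powr (-1/2)"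
    by (intro powr_mono2') auto
qed

lemma powr_mquarter: fixes x :: real assumes "x > 0" shows "x powr (-1/4) = 1 / sqrt (sqrt x)"
proof -
  have "x powr (1/4) = (x powr (1/2)) powr (1/2)" by (simp add: powr_powr)
  also have "\<dots> = sqrt (sqrt x)" using assms by (simp add: powr_half_sqrt)
  finally show ?thesis by (simp add: powr_minus_divide)
qed

lemma powr_mhalf: fixes x :: real assumes "x > 0" shows "x powr (-1/2) = 1 / sqrt x"
  using assms by (simp add: powr_minus_divide powr_half_sqrt)

lemma sqrt_le_num: fixes x y :: real assumes "x \<le> y^2" "0 \<le> y" shows "sqrt x \<le> y"
  using assms real_sqrt_le_mono[OF assms(1)] by simp

lemma R2_bound:
  fixes a b :: nat
  assumes A: "10 * a > a + b" and B: "10 * b > a + b"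
  defines "l \<equiv> (real a + real b)/2" and "p \<equiv> (real b - real a)/2"
  shows "cmod (c_coeff l p) \<le> 36 * (1 + l) powr (-1/4)"
    and "\<bar>p\<bar> \<noteq> l / sqrt 2 \<Longrightarrow> cmod (c_coeff l p) \<le> 23 * \<bar>\<bar>p\<bar> - l / sqrt 2\<bar> powr (-1/2)"
proof -
  have a1: "a \<ge> 1" using A B by linarith
  have b1: "b \<ge> 1" using A B by linarith
  define n where "n = real a + real b"
  define q where "q = sqrt (real a * real b)"
  define v where "v = (real a - real b) / (2 * q)"
  define K where "K = real a * real b / (4 * n)"
  define G where "G = (\<lambda>\<phi>::real. exp (- K * (cos \<phi> - v)^2))"
  have a0: "real a > 0" and b0: "real b > 0" using a1 b1 by auto
  have n0: "n > 0" unfolding n_def using a0 b0 by simp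
  have n1: "n \<ge> 2" unfolding n_def using a1 b1 by simp
  have K0: "K > 0" unfolding K_def using a0 b0 n0 by simp
  have qq: "q^2 = real a * real b" unfolding q_def using a0 b0 by simp
  have q0: "q > 0" unfolding q_def using a0 b0 by simp
  have lp: "nat \<lfloor>l - p\<rfloor> = a" "nat \<lfloor>l + p\<rfloor> = b" unfolding l_def p_def by (simp_all add: field_simps)
  have Gi: "G integrable_on {0..2*pi}" unfolding G_def by (intro integrable_continuous_interval G_cont)
  have cb: "cmod (c_coeff l p) \<le> integral {0..2*pi} G / (2*pi)"
  proof (rule c_bound_integral[of "sqrt (real a / real b)" G l p])
    show "sqrt (real a / real b) > 0" using a0 b0 by simp
    show "G integrable_on {0..2*pi}" by (rule Gi)
    fix \<phi> :: real
    show "2 powr (-l) * cmod (ker (sqrt (real a / real b)) (nat \<lfloor>l-p\<rfloor>) (nat \<lfloor>l+p\<rfloor>) \<phi>) \<le> G \<phi>"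
      unfolding lp using ker_pointwise[OF a1 b1, of \<phi>] unfolding G_def K_def v_def q_def n_def l_def
      by simp
  qed
  have ab9: "real a * real b \<ge> 9 * n^2 / 100"
  proof -
    have "real (a+b) < real (10*a)" "real (a+b) < real (10*b)" using A B by (simp_all only: of_nat_less_iff)
    then have "real a - n/10 > 0" "real b - n/10 > 0" unfolding n_def by simp_all
    then have "0 \<le> (real a - n/10) * (real b - n/10)" by simp
    also have "(real a - n/10) * (real b - n/10) = real a * real b - 9 * n^2/100"
      unfolding n_def by (simp add: power2_eq_square field_simps)
    finally show ?thesis by simp
  qed
  show "cmod (c_coeff l p) \<le> 36 * (1 + l) powr (-1/4)"
  proof -
    have "K \<ge> 9 * n / 400" unfolding K_def using ab9 n0 by (simp add: field_simps power2_eq_square)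
    moreover have "(1 + l) / 100 \<le> 9 * n / 400" unfolding l_def n_def[symmetric] using n1 by simp
    ultimately have Kl: "(1 + l)/100 \<le> K" by linarith
    have l0: "1 + l > 0" unfolding l_def using a0 b0 by (intro add_pos_nonneg) auto
    have "cmod (c_coeff l p) \<le> (32*pi / sqrt (2 * sqrt K)) / (2*pi)"
      using cb G_int1[OF K0, of v] unfolding G_def by (smt (verit) divide_right_mono pi_gt_zero)
    also have "\<dots> = 16 / sqrt (2 * sqrt K)" by simp
    also have "\<dots> \<le> 16 / sqrt (2 * sqrt ((1 + l)/100))"
      using Kl l0 by (intro divide_left_mono real_sqrt_le_mono mult_left_mono mult_pos_pos) auto
    also have "sqrt (2 * sqrt ((1 + l)/100)) = sqrt (sqrt (1 + l)) / sqrt 5"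
    proof -
      have "2 * sqrt ((1 + l)/100) = sqrt (1+l) / 5" by (simp add: real_sqrt_divide)
      then show ?thesis by (simp add: real_sqrt_divide)
    qed
    also have "16 / (sqrt (sqrt (1 + l)) / sqrt 5) = 16 * sqrt 5 / sqrt (sqrt (1 + l))" by simp
    also have "\<dots> \<le> 36 / sqrt (sqrt (1 + l))"
    proof -
      have "sqrt 5 \<le> 9/4" by (rule sqrt_le_num) (simp_all add: power2_eq_square)
      then show ?thesis using l0 by (intro divide_right_mono) auto
    qed
    also have "\<dots> = 36 * (1 + l) powr (-1/4)" using powr_mquarter[OF l0] by simp
    finally show ?thesis .
  qed
  assume ne: "\<bar>p\<bar> \<noteq> l / sqrt 2"
  define x where "x = \<bar>p\<bar> - l / sqrt 2"
  have x0: "\<bar>x\<bar> > 0" unfolding x_def using ne by simp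
  have l0: "l > 0" unfolding l_def using a0 b0 by simp
  have Kv: "K * (1 - v^2) = (l^2 - 2 * p^2) / (8 * l)"
  proof -
    define D where "D = (real a - real b)^2"
    define P where "P = real a * real b"
    have P0: "P > 0" unfolding P_def using a0 b0 by simp
    have v2: "v^2 = D / (4 * P)" unfolding v_def D_def P_def using qq by (simp add: power_divide power_mult_distrib)
    have K': "K = P / (4 * n)" unfolding K_def P_def ..
    have e1: "K * (1 - v^2) = (4 * P - D) / (16 * n)" unfolding v2 K' using P0 n0 by (simp add: field_simps)
    have num: "4 * P - D = n^2 - 2 * D" unfolding n_def D_def P_def by (simp add: power2_eq_square algebra_simps)
    have ln: "l = n / 2" unfolding l_def n_def by simp
    have pD: "p^2 = D / 4" unfolding p_def D_def by (simp add: power_divide power2_commute)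
    have "(l^2 - 2 * p^2) / (8 * l) = (n^2 - 2 * D) / (16 * n)" unfolding ln pD using n0 by (simp add: field_simps power2_eq_square)
    then show ?thesis unfolding e1 num by simp
  qed
  have lx: "\<bar>l^2 - 2 * p^2\<bar> \<ge> l * \<bar>x\<bar>"
  proof -
    define s where "s = sqrt (2::real)"
    have s2: "s^2 = 2" "s \<ge> 1" "s > 0" unfolding s_def by auto
    have "l^2 - 2 * p^2 = (l - s * \<bar>p\<bar>) * (l + s * \<bar>p\<bar>)" using s2 by (simp add: power2_eq_square algebra_simps)
    also have "l - s * \<bar>p\<bar> = - s * x" unfolding x_def s_def[symmetric] using s2 by (simp add: field_simps)
    finally have "\<bar>l^2 - 2 * p^2\<bar> = s * \<bar>x\<bar> * (l + s * \<bar>p\<bar>)" using s2 l0 by (simp add: abs_mult)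
    also have "\<dots> \<ge> 1 * \<bar>x\<bar> * l" using s2 l0 by (intro mult_mono) auto
    finally show ?thesis by (simp add: mult.commute)
  qed
  have Kx: "K * \<bar>1 - v^2\<bar> \<ge> \<bar>x\<bar> / 8"
  proof -
    have "K * \<bar>1 - v^2\<bar> = \<bar>K * (1 - v^2)\<bar>" using K0 by (simp add: abs_mult)
    also have "\<dots> = \<bar>(l^2 - 2 * p^2) / (8 * l)\<bar>" by (simp only: Kv)
    also have "\<dots> = \<bar>l^2 - 2 * p^2\<bar> / (8 * l)" using l0 by (simp add: abs_divide)
    also have "\<dots> \<ge> (l * \<bar>x\<bar>) / (8 * l)" using lx l0 by (intro divide_right_mono) auto
    finally show ?thesis using l0 by simp
  qed
  have v1: "v^2 \<noteq> 1"
  proof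
    assume "v^2 = 1"
    then have z: "K * \<bar>1 - v^2\<bar> = 0" by simp
    have "\<bar>x\<bar> / 8 > 0" using x0 by simp
    then show False using Kx z by linarith
  qed
  have v3: "\<bar>v\<bar> \<le> 3"
  proof -
    have "\<bar>real a - real b\<bar> \<le> \<bar>n\<bar>" unfolding n_def using a0 b0 by (simp add: abs_le_iff)
    then have "(real a - real b)^2 \<le> n^2" by (simp add: abs_le_square_iff)
    also have "n^2 \<le> 36 * (real a * real b)"
    proof -
      have "0 \<le> n^2" by simp
      then show ?thesis using ab9 by linarith
    qed
    finally have h: "(real a - real b)^2 \<le> 36 * (real a * real b)" .
    have v2: "v^2 = (real a - real b)^2 / (4 * (real a * real b))" unfolding v_def using qq by (simp add: power_divide power_mult_distrib)
    have "v^2 \<le> 36 * (real a * real b) / (4 * (real a * real b))" unfolding v2 using h a0 b0 by (intro divide_right_mono) auto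
    also have "\<dots> = 3^2" using a0 b0 by simp
    finally have "v^2 \<le> 3^2" .
    then have "\<bar>v\<bar> \<le> \<bar>3\<bar>" by (simp only: abs_le_square_iff)
    then show ?thesis by simp
  qed
  have "cmod (c_coeff l p) \<le> (16*pi / sqrt (K * \<bar>1 - v^2\<bar>)) / (2*pi)"
    using cb G_int2[OF K0 v3 v1] unfolding G_def by (smt (verit) divide_right_mono pi_gt_zero)
  also have "\<dots> = 8 / sqrt (K * \<bar>1 - v^2\<bar>)" by simp
  also have "\<dots> \<le> 8 / sqrt (\<bar>x\<bar> / 8)"
    using Kx x0 by (intro divide_left_mono real_sqrt_le_mono mult_pos_pos) auto
  also have "\<dots> = 8 * sqrt 8 / sqrt \<bar>x\<bar>" by (simp add: real_sqrt_divide)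
  also have "\<dots> \<le> 23 / sqrt \<bar>x\<bar>"
  proof -
    have "sqrt 8 \<le> 23/8" by (rule sqrt_le_num) (simp_all add: power2_eq_square)
    then show ?thesis using x0 by (intro divide_right_mono) auto
  qed
  also have "\<dots> = 23 * \<bar>x\<bar> powr (-1/2)" using powr_mhalf[OF x0] by simp
  finally show "cmod (c_coeff l p) \<le> 23 * \<bar>\<bar>p\<bar> - l / sqrt 2\<bar> powr (-1/2)" unfolding x_def .
qed

theorem propositionA5:
  shows "\<exists>C::real. \<forall>l p::real. l - p \<in> \<nat> \<and> l + p \<in> \<nat> \<longrightarrow>
           cmod (c_coeff l p) \<le> C * bound_term l p"
proof -
  obtain E where E0: "E > 0" and E: "\<And>a b. (10 * a \<le> a + b \<or> 10 * b \<le> a + b) \<Longrightarrow>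
     2 powr (-(real (a+b)/2)) * \<bar>Ssum a b\<bar> \<le> E / sqrt (1 + real (a+b)/2)"
    using R1_bound by blast
  define C where "C = max 36 E"
  have "cmod (c_coeff l p) \<le> C * bound_term l p" if h: "l - p \<in> \<nat>" "l + p \<in> \<nat>" for l p :: real
  proof -
    obtain a where a: "l - p = real a" using h(1) by (auto elim: Nats_cases)
    obtain b where b: "l + p = real b" using h(2) by (auto elim: Nats_cases)
    have lab: "l = (real a + real b)/2"
    proof -
      have "l = ((l - p) + (l + p))/2" by simp
      then show ?thesis unfolding a b .
    qed
    have pab: "p = (real b - real a)/2"
    proof -
      have "p = ((l + p) - (l - p))/2" by simp
      then show ?thesis unfolding a b .
    qed
    have pl: "\<bar>p\<bar> \<le> l" using a b by (simp add: abs_le_iff)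
    have bt0: "0 \<le> bound_term l p" by (rule bound_term_nonneg)
    show ?thesis
    proof (cases "10 * a > a + b \<and> 10 * b > a + b")
      case True
      then have A: "10 * a > a + b" and B: "10 * b > a + b" by auto
      have r1: "cmod (c_coeff l p) \<le> 36 * (1 + l) powr (-1/4)"
        using R2_bound(1)[OF A B] unfolding lab[symmetric] pab[symmetric] .
      have r2: "cmod (c_coeff l p) \<le> 23 * \<bar>\<bar>p\<bar> - l / sqrt 2\<bar> powr (-1/2)" if ne: "\<bar>p\<bar> \<noteq> l / sqrt 2"
        using R2_bound(2)[OF A B] ne unfolding lab[symmetric] pab[symmetric] by blast
      have "cmod (c_coeff l p) \<le> 36 * bound_term l p"
      proof (rule BT_combine)
        show "cmod (c_coeff l p) \<le> 36 * (1 + l) powr (-1/4)" by (rule r1)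
        assume ne: "\<bar>p\<bar> \<noteq> l / sqrt 2"
        have "0 \<le> \<bar>\<bar>p\<bar> - l / sqrt 2\<bar> powr (-1/2)" by simp
        then show "cmod (c_coeff l p) \<le> 36 * \<bar>\<bar>p\<bar> - l / sqrt 2\<bar> powr (-1/2)"
          using r2[OF ne] by linarith
      qed simp
      also have "\<dots> \<le> C * bound_term l p" unfolding C_def using bt0 by (intro mult_right_mono) auto
      finally show ?thesis .
    next
      case False
      then have R: "10 * a \<le> a + b \<or> 10 * b \<le> a + b" by auto
      have l1: "1 + l > 0" using pl by simp
      have lp: "nat \<lfloor>l - p\<rfloor> = a" "nat \<lfloor>l + p\<rfloor> = b" using a b by simp_all
      have "cmod (c_coeff l p) = 2 powr (-l) * \<bar>Ssum a b\<bar>"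
        unfolding c_coeff_eq lp by (simp only: norm_of_real abs_mult) simp
      also have "\<dots> \<le> E / sqrt (1 + l)" using E[OF R] unfolding lab by simp
      also have "\<dots> = E * (1 + l) powr (-1/2)" using powr_mhalf[OF l1] by simp
      finally have c1: "cmod (c_coeff l p) \<le> E * (1 + l) powr (-1/2)" .
      have "cmod (c_coeff l p) \<le> E * bound_term l p"
      proof (rule BT_combine)
        show "0 \<le> E" using E0 by simp
        show "cmod (c_coeff l p) \<le> E * (1 + l) powr (-1/4)"
          using c1 BT_half(1)[OF pl] E0 by (smt (verit) mult_left_mono)
        assume ne: "\<bar>p\<bar> \<noteq> l / sqrt 2"
        show "cmod (c_coeff l p) \<le> E * \<bar>\<bar>p\<bar> - l / sqrt 2\<bar> powr (-1/2)"
          using c1 BT_half(2)[OF pl ne] E0 by (smt (verit) mult_left_mono)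
      qed
      also have "\<dots> \<le> C * bound_term l p" unfolding C_def using bt0 by (intro mult_right_mono) auto
      finally show ?thesis .
    qed
  qed
  then show ?thesis by blast
qed

end
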